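(* Let $\sigma$ be the morphism on $\{c_0,c_1,c_2,c_3\}$ given by $\sigma(c_0)=c_0c_1$, $\sigma(c_1)=c_2c_3$, $\sigma(c_2)=c_0c_1c_2$, $\sigma(c_3)=c_3c_2c_3$, and let $x_\sigma=\lim_n\sigma^n(c_0)$ be its fixed point starting with $c_0$. Let $g$ be the morphism on $\{a,b\}$ given by $g(a)=baa$, $g(b)=ba$, with fixed point $x_G=\lim_n g^n(b)$, and let $\delta$ be the morphism $\delta(a)=c_2c_3$, $\delta(b)=c_0c_1$. Then $x_\sigma=\delta(x_G)$. Moreover, for all $n\ge1$, the number $p_\sigma(n)$ of distinct words of length $n$ occurring in $x_\sigma$ equals $n+3$. *)

theory Defs
  imports Main
begin

datatype c4 = C0 | C1 | C2 | C3
datatype ab = A | B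

definition mor :: "('a \<Rightarrow> 'b list) \<Rightarrow> 'a list \<Rightarrow> 'b list" where
  "mor f w = concat (map f w)"

definition converges_to :: "(nat \<Rightarrow> 'a list) \<Rightarrow> (nat \<Rightarrow> 'a) \<Rightarrow> bool" where
  "converges_to w x \<longleftrightarrow> (\<forall>i. \<exists>N. \<forall>n\<ge>N. i < length (w n) \<and> w n ! i = x i)"

definition word_lim :: "(nat \<Rightarrow> 'a list) \<Rightarrow> (nat \<Rightarrow> 'a)" where
  "word_lim w = (THE x. converges_to w x)"

definition fixpt :: "('a \<Rightarrow> 'a list) \<Rightarrow> 'a \<Rightarrow> (nat \<Rightarrow> 'a)" where
  "fixpt f a = word_lim (\<lambda>n. (mor f ^^ n) [a])"

definition mor_inf :: "('a \<Rightarrow> 'b list) \<Rightarrow> (nat \<Rightarrow> 'a) \<Rightarrow> (nat \<Rightarrow> 'b)" where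
  "mor_inf f x = word_lim (\<lambda>n. mor f (map x [0..<n]))"

definition factors :: "(nat \<Rightarrow> 'a) \<Rightarrow> nat \<Rightarrow> 'a list set" where
  "factors x n = {map x [i..<i+n] | i. True}"

definition complexity :: "(nat \<Rightarrow> 'a) \<Rightarrow> nat \<Rightarrow> nat" where
  "complexity x n = card (factors x n)"

fun sigma :: "c4 \<Rightarrow> c4 list" where
  "sigma C0 = [C0, C1]"
| "sigma C1 = [C2, C3]"
| "sigma C2 = [C0, C1, C2]"
| "sigma C3 = [C3, C2, C3]"

fun g :: "ab \<Rightarrow> ab list" where
  "g A = [B, A, A]"
| "g B = [B, A]"

fun delta :: "ab \<Rightarrow> c4 list" where
  "delta A = [C2, C3]"
| "delta B = [C0, C1]"

end

theory Submission
  imports Defs "HOL-Library.Sublist"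
begin

lemma mor_Nil[simp]: "mor f [] = []" by (simp add: mor_def)
lemma mor_Cons[simp]: "mor f (x # xs) = f x @ mor f xs" by (simp add: mor_def)
lemma mor_append[simp]: "mor f (xs @ ys) = mor f xs @ mor f ys" by (simp add: mor_def)

lemma mor_prefix: "prefix xs ys \<Longrightarrow> prefix (mor f xs) (mor f ys)"
  by (auto simp: prefix_def)

lemma converges_unique:
  assumes "converges_to w x" "converges_to w y" shows "x = y"
proof
  fix i
  from assms obtain N1 N2 where "\<forall>n\<ge>N1. i < length (w n) \<and> w n ! i = x i"
    "\<forall>n\<ge>N2. i < length (w n) \<and> w n ! i = y i" unfolding converges_to_def by blast
  then show "x i = y i" by (metis max.cobounded1 max.cobounded2)
qed

lemma chain_prefix_mono:
  assumes "\<And>n. prefix (w n) (w (Suc n))" and "m \<le> n" shows "prefix (w m) (w n)"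
  using assms(2)
proof (induction n rule: dec_induct)
  case base then show ?case by simp
next
  case (step n) then show ?case using assms(1) prefix_order.trans by blast
qed

lemma prefix_nth_eq: "prefix xs ys \<Longrightarrow> i < length xs \<Longrightarrow> xs ! i = ys ! i"
  by (auto simp: prefix_def nth_append)

lemma chain_lim:
  assumes pre: "\<And>n. prefix (w n) (w (Suc n))" and len: "\<And>n. n \<le> length (w n)"
    and i: "i < length (w n)"
  shows "word_lim w i = w n ! i"
proof -
  define x where "x = (\<lambda>i. w (Suc i) ! i)"
  have eq: "w m ! j = w k ! j" if "j < length (w m)" "j < length (w k)" for m k j
  proof (cases "m \<le> k")
    case True then show ?thesis using chain_prefix_mono[of w m k, OF pre True] prefix_nth_eq that by blast
  next
    case False then have "k \<le> m" by simp
    then show ?thesis using chain_prefix_mono[of w k m, OF pre] prefix_nth_eq that by metis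
  qed
  have c: "converges_to w x" unfolding converges_to_def
  proof
    fix j
    show "\<exists>N. \<forall>m\<ge>N. j < length (w m) \<and> w m ! j = x j"
    proof (intro exI allI impI)
      fix m assume "Suc j \<le> m"
      then have "j < length (w m)" using len[of m] by simp
      moreover have "j < length (w (Suc j))" using len[of "Suc j"] by simp
      ultimately show "j < length (w m) \<and> w m ! j = x j" unfolding x_def using eq by blast
    qed
  qed
  have "word_lim w = x" unfolding word_lim_def
    using c converges_unique by blast
  then show ?thesis using eq i len unfolding x_def by (metis Suc_le_eq)
qed


abbreviation W where "W n \<equiv> (mor g ^^ n) [B]"
abbreviation S where "S n \<equiv> (mor sigma ^^ n) [C0]"

lemma len_mor_g: "2 * length xs \<le> length (mor g xs)"
proof (induction xs)
  case (Cons x xs) then show ?case by (cases x) auto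
qed simp

lemma len_mor_sigma: "2 * length xs \<le> length (mor sigma xs)"
proof (induction xs)
  case (Cons x xs) then show ?case by (cases x) auto
qed simp

lemma len_mor_delta[simp]: "length (mor delta xs) = 2 * length xs"
proof (induction xs)
  case (Cons x xs) then show ?case by (cases x) auto
qed simp

lemma W_prefix: "prefix (W n) (W (Suc n))"
proof (induction n)
  case 0 then show ?case by simp
next
  case (Suc n) then show ?case using mor_prefix by (metis funpow.simps(2) o_apply)
qed

lemma S_prefix: "prefix (S n) (S (Suc n))"
proof (induction n)
  case 0 then show ?case by simp
next
  case (Suc n) then show ?case using mor_prefix by (metis funpow.simps(2) o_apply)
qed

lemma W_len: "n < length (W n)"
proof (induction n)
  case (Suc n) then show ?case using len_mor_g[of "W n"] by simp
qed simp

lemma S_len: "n < length (S n)"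
proof (induction n)
  case (Suc n) then show ?case using len_mor_sigma[of "S n"] by simp
qed simp

definition Y where "Y = fixpt g B"
definition X where "X = fixpt sigma C0"

lemma Y_nth: "i < length (W n) \<Longrightarrow> Y i = W n ! i"
  unfolding Y_def fixpt_def by (rule chain_lim[OF W_prefix less_imp_le[OF W_len]])

lemma X_nth: "i < length (S n) \<Longrightarrow> X i = S n ! i"
  unfolding X_def fixpt_def by (rule chain_lim[OF S_prefix less_imp_le[OF S_len]])

lemma sigma_delta: "mor sigma (mor delta xs) = mor delta (mor g xs)"
proof (induction xs)
  case (Cons x xs) then show ?case by (cases x) auto
qed simp

lemma S_W: "S (Suc n) = mor delta (W n)"
proof (induction n)
  case 0 then show ?case by simp
next
  case (Suc n) then show ?case using sigma_delta by simp
qed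

lemma map_Y_take: "k \<le> length (W n) \<Longrightarrow> map Y [0..<k] = take k (W n)"
  by (rule nth_equalityI) (auto simp: Y_nth)

lemma MD_nth: "i < length ys \<Longrightarrow> mor delta ys ! (2*i) = hd (delta (ys ! i)) \<and>
   mor delta ys ! (2*i+1) = delta (ys ! i) ! 1"
proof (induction ys arbitrary: i)
  case Nil then show ?case by simp
next
  case (Cons y ys)
  show ?case
  proof (cases i)
    case 0 then show ?thesis by (cases y) auto
  next
    case (Suc j)
    have d: "length (delta y) = 2" by (cases y) auto
    have "j < length ys" using Cons.prems Suc by simp
    then show ?thesis using Cons.IH[of j] Suc d by (simp add: nth_append)
  qed
qed

definition MI where "MI = mor_inf delta Y"

lemma MI_nth: "i < 2 * k \<Longrightarrow> MI i = mor delta (map Y [0..<k]) ! i"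
  unfolding MI_def mor_inf_def
  by (rule chain_lim[where w="\<lambda>k. mor delta (map Y [0..<k])"]) (auto simp: prefix_def)

lemma part1: "X = MI"
proof
  fix i
  obtain n where n: "Suc i < length (W n)" using W_len by (meson less_trans_Suc lessI)
  have "MI i = mor delta (map Y [0..<Suc i]) ! i" by (rule MI_nth) simp
  also have "\<dots> = mor delta (take (Suc i) (W n)) ! i" using n map_Y_take[of "Suc i" n] by simp
  also have "\<dots> = mor delta (W n) ! i"
  proof (rule prefix_nth_eq)
    show "prefix (mor delta (take (Suc i) (W n))) (mor delta (W n))"
      by (rule mor_prefix) (simp add: take_is_prefix)
    show "i < length (mor delta (take (Suc i) (W n)))" using n by simp
  qed
  also have "\<dots> = X i" using X_nth[of i "Suc n"] S_W n by simp
  finally show "X i = MI i" by simp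
qed


definition L where "L w \<longleftrightarrow> (\<exists>n. sublist w (W n))"

definition RS where "RS w \<longleftrightarrow> L (w @ [A]) \<and> L (w @ [B])"

lemma W_Suc: "W (Suc n) = mor g (W n)" by simp

lemma L_sub: "L w \<Longrightarrow> sublist v w \<Longrightarrow> L v"
  unfolding L_def using sublist_order.order.trans by blast

lemma L_Nil: "L []" unfolding L_def by auto

lemma L_mor: "L w \<Longrightarrow> L (mor g w)"
proof -
  assume "L w"
  then obtain n p s where "W n = p @ w @ s" unfolding L_def sublist_def by blast
  then have "W (Suc n) = mor g p @ mor g w @ mor g s" by simp
  then show "L (mor g w)" unfolding L_def sublist_def by blast
qed

lemma W_ext: "\<exists>t. t \<noteq> [] \<and> W (Suc n) = W n @ t"
proof -
  obtain t where t: "W (Suc n) = W n @ t" using W_prefix[of n] unfolding prefix_def by blast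
  have "W n \<noteq> []" using W_len[of n] by auto
  then have "0 < length (W n)" by simp
  then have "length (W n) < length (mor g (W n))" using len_mor_g[of "W n"] by linarith
  then have "length (W n) < length (W (Suc n))" by (simp only: W_Suc)
  then show ?thesis using t by auto
qed

lemma L_ext: "L w \<Longrightarrow> \<exists>c. L (w @ [c])"
proof -
  assume "L w"
  then obtain n p s where ws: "W n = p @ w @ s" unfolding L_def sublist_def by blast
  obtain t where t: "t \<noteq> []" "W (Suc n) = W n @ t" using W_ext by blast
  then have "W (Suc n) = p @ (w @ [hd (s @ t)]) @ tl (s @ t)" using ws by simp
  then show ?thesis unfolding L_def sublist_def by blast
qed

lemma mor_g_ok: "\<not> sublist [B,B] (mor g U) \<and> \<not> sublist [A,A,A] (mor g U) \<and>
   (mor g U = [] \<or> hd (mor g U) = B)"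
proof (induction U)
  case Nil then show ?case by (simp add: sublist_def)
next
  case (Cons x U)
  then show ?case
    by (cases x; cases "mor g U") (auto simp: sublist_Cons_right prefix_def)
qed

lemma W_ok: "\<not> sublist [B,B] (W n) \<and> \<not> sublist [A,A,A] (W n)"
proof (cases n)
  case 0 then show ?thesis by (auto simp: sublist_Cons_right)
next
  case (Suc m) then show ?thesis using mor_g_ok[of "W m"] by simp
qed

lemma not_L_BB: "\<not> L [B,B]" using W_ok L_def by blast
lemma not_L_AAA: "\<not> L [A,A,A]" using W_ok L_def by blast

lemma desub: "mor g U = x @ B # y \<Longrightarrow>
   \<exists>U1 c U2. U = U1 @ c # U2 \<and> x = mor g U1 \<and> B # y = g c @ mor g U2"
proof (induction U arbitrary: x)
  case Nil then show ?case by simp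
next
  case (Cons c U)
  show ?case
  proof (cases x)
    case Nil then show ?thesis using Cons.prems by (metis append_Nil mor_Cons mor_Nil)
  next
    case (Cons z x')
    show ?thesis
    proof (cases c)
      case A
      then obtain x'' where x'': "x = [B,A,A] @ x''" "mor g U = x'' @ B # y"
        using Cons Cons.prems
        by (auto simp: Cons_eq_append_conv)
      then obtain U1 c' U2 where "U = U1 @ c' # U2" "x'' = mor g U1" "B # y = g c' @ mor g U2"
        using Cons.IH by blast
      then show ?thesis using x'' A by (intro exI[of _ "A # U1"] exI[of _ c'] exI[of _ U2]) auto
    next
      case B
      then obtain x'' where x'': "x = [B,A] @ x''" "mor g U = x'' @ B # y"
        using Cons Cons.prems
        by (auto simp: Cons_eq_append_conv)
      then obtain U1 c' U2 where "U = U1 @ c' # U2" "x'' = mor g U1" "B # y = g c' @ mor g U2"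
        using Cons.IH by blast
      then show ?thesis using x'' B by (intro exI[of _ "B # U1"] exI[of _ c'] exI[of _ U2]) auto
    qed
  qed
qed


lemma occ: assumes "L (v @ [B,A,c])" shows "\<exists>U. L (U @ [c]) \<and> suffix v (mor g U)"
proof -
  obtain n p s where ws: "W n = p @ (v @ [B,A,c]) @ s" using assms unfolding L_def sublist_def by blast
  obtain t where t: "W (Suc n) = W n @ t" using W_ext by blast
  have "mor g (W n) = (p @ v) @ B # (A # c # s @ t)" using ws t by simp
  then obtain U1 c' U2 where U: "W n = U1 @ c' # U2" "p @ v = mor g U1"
     "B # A # c # s @ t = g c' @ mor g U2" using desub by blast
  have "c' = c"
  proof (cases c')
    case A then show ?thesis using U(3) by (cases c) auto
  next
    case B then have "mor g U2 = c # s @ t" using U(3) by simp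
    then have "c = B" using mor_g_ok[of U2] by auto
    then show ?thesis using B by simp
  qed
  then have "L (U1 @ [c])" using U(1) unfolding L_def sublist_def
    by (metis append.assoc append_Cons append_Nil)
  moreover have "suffix v (mor g U1)" using U(2) unfolding suffix_def by metis
  ultimately show ?thesis by blast
qed

lemma g_last: "\<exists>q. g x = q @ [A]" by (cases x) auto

lemma common_suf:
  "suffix v (mor g U1) \<Longrightarrow> suffix v (mor g U2) \<Longrightarrow>
   \<exists>u. suffix u U1 \<and> suffix u U2 \<and> suffix v (A # mor g u) \<and> 2 * length u \<le> length v"
proof (induction U1 arbitrary: U2 v rule: rev_induct)
  case Nil then show ?case by (intro exI[of _ "[]"]) simp
next
  case (snoc x U1)
  show ?case
  proof (cases U2 rule: rev_exhaust)
    case Nil then show ?thesis using snoc.prems by (intro exI[of _ "[]"]) simp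
  next
    case (snoc U2' y)
    note p1 = snoc.prems(1) and p2 = snoc.prems(2)[unfolded snoc]
    have p1': "suffix v (mor g U1 @ g x)" using p1 by simp
    have p2': "suffix v (mor g U2' @ g y)" using p2 by simp
    show ?thesis
    proof (cases "suffix (g x) v")
      case True
      then obtain v' where v': "v = v' @ g x" unfolding suffix_def by blast
      have "suffix (g x) (mor g U2' @ g y)" using True p2' suffix_order.trans by blast
      then have xy: "x = y" by (cases x; cases y) (auto simp: suffix_to_prefix)
      have "suffix v' (mor g U1)" using p1' v' by simp
      moreover have "suffix v' (mor g U2')" using p2' v' xy by simp
      ultimately obtain u where u: "suffix u U1" "suffix u U2'" "suffix v' (A # mor g u)"
        "2 * length u \<le> length v'" using snoc.IH by blast
      have lx: "2 \<le> length (g x)" by (cases x) auto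
      show ?thesis
        using u v' xy lx snoc by (intro exI[of _ "u @ [x]"]) (auto simp: suffix_def)
    next
      case False
      then have vx: "suffix v (g x)" using p1' suffix_same_cases[of v "mor g U1 @ g x" "g x"]
        by (auto simp: suffix_def)
      show ?thesis
      proof (cases "length v \<le> 1")
        case True
        have "suffix v [A]"
        proof -
          obtain q where q: "g x = q @ [A]" using g_last by blast
          show ?thesis using vx True unfolding q
            by (cases v rule: rev_exhaust) auto
        qed
        then show ?thesis by (intro exI[of _ "[]"]) simp
      next
        case False
        then obtain d e r where r: "rev v = d # e # r"
          by (cases "rev v"; cases "tl (rev v)") auto
        have "x = y"
        proof (rule ccontr)
          assume "x \<noteq> y"
          then show False using vx p2' r
            by (cases x; cases y) (auto simp: suffix_to_prefix)
        qed
        then show ?thesis using vx False snoc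
          by (intro exI[of _ "[x]"]) (auto intro: suffix_ConsI)
      qed
    qed
  qed
qed


lemma RS_last: assumes "RS w" "w \<noteq> []" shows "\<exists>w'. w = w' @ [A]"
proof -
  obtain w' c where w: "w = w' @ [c]" using assms(2) by (cases w rule: rev_exhaust) auto
  have "c \<noteq> B"
  proof
    assume "c = B"
    then have "L (w' @ [B,B])" using assms(1) w unfolding RS_def by simp
    then show False using not_L_BB L_sub by blast
  qed
  then show ?thesis using w by (cases c) auto
qed

lemma RS_end: assumes "RS w" "2 \<le> length w" shows "\<exists>v. w = v @ [B,A]"
proof -
  obtain w1 where w1: "w = w1 @ [A]" using RS_last assms by fastforce
  obtain v d where v: "w1 = v @ [d]" using assms(2) w1 by (cases w1 rule: rev_exhaust) auto
  have "d \<noteq> A"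
  proof
    assume "d = A"
    then have "L (v @ [A,A,A])" using assms(1) w1 v unfolding RS_def by simp
    then show False using not_L_AAA L_sub by blast
  qed
  then show ?thesis using w1 v by (cases d) auto
qed

lemma RS_desub: assumes "RS w" "2 \<le> length w"
  shows "\<exists>u. RS u \<and> length u < length w \<and> suffix w (A # mor g u @ [B,A])"
proof -
  obtain v where v: "w = v @ [B,A]" using RS_end assms by blast
  have "L (v @ [B,A,A])" "L (v @ [B,A,B])" using assms(1) v unfolding RS_def by simp_all
  then obtain U1 U2 where U: "L (U1 @ [A])" "suffix v (mor g U1)" "L (U2 @ [B])" "suffix v (mor g U2)"
    using occ by metis
  then obtain u where u: "suffix u U1" "suffix u U2" "suffix v (A # mor g u)" "2 * length u \<le> length v"
    using common_suf by blast
  have "suffix (u @ [A]) (U1 @ [A])" using u(1) by simp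
  then have "L (u @ [A])" using U(1) L_sub suffix_imp_sublist by blast
  moreover have "suffix (u @ [B]) (U2 @ [B])" using u(2) by simp
  then have "L (u @ [B])" using U(3) L_sub suffix_imp_sublist by blast
  ultimately have "RS u" unfolding RS_def by simp
  moreover have "length u < length w" using u(4) v by simp
  moreover have "suffix (v @ [B,A]) ((A # mor g u) @ [B,A])" using u(3)
    by (simp only: same_suffix_suffix)
  then have "suffix w (A # mor g u @ [B,A])" using v by simp
  ultimately show ?thesis by blast
qed

lemma RS_suffix: assumes "RS w" "suffix w' w" shows "RS w'"
proof -
  have "suffix (w' @ [c]) (w @ [c])" for c using assms(2) by simp
  then show ?thesis using assms(1) L_sub suffix_imp_sublist unfolding RS_def by blast
qed

lemma suffix_Amor: assumes "suffix u1 u2" shows "suffix (A # mor g u1) (A # mor g u2)"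
proof -
  obtain p where p: "u2 = p @ u1" using assms unfolding suffix_def by blast
  show ?thesis
  proof (cases p rule: rev_exhaust)
    case Nil then show ?thesis using p by simp
  next
    case (snoc p' x)
    obtain q where "g x = q @ [A]" using g_last by blast
    then have "A # mor g u2 = (A # mor g p' @ q) @ (A # mor g u1)" using p snoc by simp
    then show ?thesis unfolding suffix_def by blast
  qed
qed

lemma RS_cmp: "RS w1 \<Longrightarrow> RS w2 \<Longrightarrow> suffix w1 w2 \<or> suffix w2 w1"
proof (induction "length w1 + length w2" arbitrary: w1 w2 rule: less_induct)
  case less
  have small: "suffix a b" if h: "RS a" "RS b" "length a \<le> 1" "length a \<le> length b" for a b
  proof (cases "a = []")
    case True then show ?thesis by simp
  next
    case False
    then obtain a' where "a = a' @ [A]" using RS_last[OF h(1)] by blast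
    then have a: "a = [A]" using h(3) by simp
    have "b \<noteq> []" using h(4) False by auto
    then obtain b' where "b = b' @ [A]" using RS_last[OF h(2)] by blast
    with a show ?thesis by simp
  qed
  show ?case
  proof (cases "length w1 \<le> 1 \<or> length w2 \<le> 1")
    case True
    show ?thesis
    proof (cases "length w1 \<le> length w2")
      case True
      then have "length w1 \<le> 1" using \<open>length w1 \<le> 1 \<or> length w2 \<le> 1\<close> by linarith
      then show ?thesis using small[OF less.prems(1,2) _ True] by simp
    next
      case False
      then have le: "length w2 \<le> length w1" by simp
      then have "length w2 \<le> 1" using \<open>length w1 \<le> 1 \<or> length w2 \<le> 1\<close> by linarith
      then show ?thesis using small[OF less.prems(2,1) _ le] by simp
    qed
  next
    case False
    obtain u1 where u1: "RS u1" "length u1 < length w1" "suffix w1 (A # mor g u1 @ [B,A])"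
      using RS_desub[OF less.prems(1)] False by auto
    obtain u2 where u2: "RS u2" "length u2 < length w2" "suffix w2 (A # mor g u2 @ [B,A])"
      using RS_desub[OF less.prems(2)] False by auto
    have "suffix u1 u2 \<or> suffix u2 u1" using less.hyps[of u1 u2] u1 u2 by simp
    then show ?thesis
    proof
      assume "suffix u1 u2"
      then have "suffix (A # mor g u1 @ [B,A]) (A # mor g u2 @ [B,A])"
        using suffix_Amor by (metis append_Cons same_suffix_suffix)
      then have "suffix w1 (A # mor g u2 @ [B,A])" using u1(3) suffix_order.trans by blast
      then show ?thesis using u2(3) suffix_same_cases by blast
    next
      assume "suffix u2 u1"
      then have "suffix (A # mor g u2 @ [B,A]) (A # mor g u1 @ [B,A])"
        using suffix_Amor by (metis append_Cons same_suffix_suffix)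
      then have "suffix w2 (A # mor g u1 @ [B,A])" using u2(3) suffix_order.trans by blast
      then show ?thesis using u1(3) suffix_same_cases by blast
    qed
  qed
qed

lemma RS_grow: assumes "RS w" shows "RS (mor g w @ [B,A])"
proof -
  have "L (mor g (w @ [A]))" using assms L_mor unfolding RS_def by blast
  then have 1: "L ((mor g w @ [B,A]) @ [A])" by simp
  obtain c where "L ((w @ [B]) @ [c])" using assms L_ext unfolding RS_def by blast
  then have "L (mor g w @ [B,A] @ g c)" using L_mor by fastforce
  moreover obtain q where "g c = B # q" by (cases c) auto
  ultimately have "L (((mor g w @ [B,A]) @ [B]) @ q)" by simp
  then have "L ((mor g w @ [B,A]) @ [B])" using L_sub sublist_append_rightI by blast
  with 1 show ?thesis unfolding RS_def by simp
qed

lemma RS_long: "\<exists>w. RS w \<and> m \<le> length w"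
proof (induction m)
  case 0 have "W 1 = [B,A]" by simp
  have "sublist [A] [B,A]" "sublist [B] [B,A]" by (auto simp: sublist_Cons_right)
  then have "RS []" unfolding RS_def L_def using \<open>W 1 = [B,A]\<close> by (metis append_Nil)
  then show ?case by blast
next
  case (Suc m)
  then obtain w where "RS w" "m \<le> length w" by blast
  then show ?case using RS_grow[of w] len_mor_g[of w] by (intro exI[of _ "mor g w @ [B,A]"]) auto
qed

lemma RS_exists: "\<exists>w. RS w \<and> length w = m"
proof -
  obtain w where "RS w" "m \<le> length w" using RS_long by blast
  then show ?thesis using RS_suffix[of w "drop (length w - m) w"] suffix_drop by fastforce
qed


definition F where "F m = {w. L w \<and> length w = m}"

lemma UNIV_ab: "(UNIV :: ab set) = {A, B}" using ab.exhaust by auto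

lemma finite_F: "finite (F m)"
proof -
  have "F m \<subseteq> {xs. set xs \<subseteq> {A,B} \<and> length xs = m}" unfolding F_def using UNIV_ab by auto
  then show ?thesis using finite_lists_length_eq[of "{A,B}" m] finite_subset by blast
qed

lemma RS_unique: assumes "RS w1" "RS w2" "length w1 = length w2" shows "w1 = w2"
proof -
  have "suffix w1 w2 \<or> suffix w2 w1" using RS_cmp assms by blast
  then show ?thesis using assms(3) unfolding suffix_def by auto
qed

lemma card_F: "card (F m) = Suc m"
proof (induction m)
  case 0
  have "F 0 = {[]}" unfolding F_def using L_Nil by auto
  then show ?case by simp
next
  case (Suc m)
  obtain r where r: "RS r" "length r = m" using RS_exists by blast
  have rA: "r @ [A] \<in> F (Suc m)" using r unfolding RS_def F_def by simp
  have bij: "bij_betw butlast (F (Suc m) - {r @ [A]}) (F m)"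
  proof (rule bij_betw_imageI)
    show "inj_on butlast (F (Suc m) - {r @ [A]})"
    proof
      fix x y assume x: "x \<in> F (Suc m) - {r @ [A]}" and y: "y \<in> F (Suc m) - {r @ [A]}"
        and e: "butlast x = butlast y"
      have xl: "length x = Suc m" "L x" using x unfolding F_def by auto
      then have "x \<noteq> []" by auto
      then have xs: "x = butlast x @ [last x]" by simp
      have yl: "length y = Suc m" "L y" using y unfolding F_def by auto
      then have "y \<noteq> []" by auto
      then have ys: "y = butlast y @ [last y]" by simp
      show "x = y"
      proof (rule ccontr)
        assume "x \<noteq> y"
        have ne: "last x \<noteq> last y"
        proof
          assume "last x = last y"
          then have "x = y" using xs ys e by (metis)
          then show False using \<open>x \<noteq> y\<close> by simp
        qed
        have Lx: "L (butlast x @ [last x])" using xl(2) xs by simp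
        have Ly: "L (butlast x @ [last y])" using yl(2) ys e by simp
        have "RS (butlast x)" unfolding RS_def
          using Lx Ly ne by (cases "last x"; cases "last y") auto
        moreover have "length (butlast x) = m" using xl by simp
        ultimately have "butlast x = r" using RS_unique r by blast
        then have "x = r @ [A] \<or> y = r @ [A]" using xs ys e ne
          by (cases "last x"; cases "last y") auto
        then show False using x y by blast
      qed
    qed
    show "butlast ` (F (Suc m) - {r @ [A]}) = F m"
    proof
      show "butlast ` (F (Suc m) - {r @ [A]}) \<subseteq> F m"
      proof
        fix z assume "z \<in> butlast ` (F (Suc m) - {r @ [A]})"
        then obtain x where x: "x \<in> F (Suc m)" "z = butlast x" by blast
        have "prefix (butlast x) x" by (simp add: prefixeq_butlast)
        then show "z \<in> F m" using x L_sub prefix_imp_sublist unfolding F_def by fastforce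
      qed
      show "F m \<subseteq> butlast ` (F (Suc m) - {r @ [A]})"
      proof
        fix w assume w: "w \<in> F m"
        then obtain c where c: "L (w @ [c])" using L_ext unfolding F_def by blast
        show "w \<in> butlast ` (F (Suc m) - {r @ [A]})"
        proof (cases "w @ [c] = r @ [A]")
          case False
          then have "w @ [c] \<in> F (Suc m) - {r @ [A]}" using c w unfolding F_def by simp
          then show ?thesis by (metis butlast_snoc image_eqI)
        next
          case True
          then have "w = r" by simp
          then have "w @ [B] \<in> F (Suc m) - {r @ [A]}" using r w unfolding F_def RS_def by simp
          then show ?thesis by (metis butlast_snoc image_eqI)
        qed
      qed
    qed
  qed
  have "card (F (Suc m)) = Suc (card (F (Suc m) - {r @ [A]}))"
    using card_Suc_Diff1[OF finite_F rA] by simp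
  also have "card (F (Suc m) - {r @ [A]}) = card (F m)" using bij bij_betw_same_card by blast
  finally show ?case using Suc.IH by simp
qed

lemma factors_Y: "factors Y k = F k"
proof
  show "factors Y k \<subseteq> F k"
  proof
    fix w assume "w \<in> factors Y k"
    then obtain i where w: "w = map Y [i..<i+k]" unfolding factors_def by blast
    have len: "i + k \<le> length (W (i+k))" using W_len[of "i+k"] by simp
    have "w = take k (drop i (W (i+k)))" unfolding w
      by (rule nth_equalityI) (use len in \<open>auto simp: Y_nth\<close>)
    moreover have "sublist (take k (drop i (W (i+k)))) (W (i+k))"
      unfolding sublist_def
      by (rule exI[of _ "take i (W (i+k))"], rule exI[of _ "drop k (drop i (W (i+k)))"]) (metis append_take_drop_id)
    ultimately show "w \<in> F k" unfolding F_def L_def using len by auto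
  qed
  show "F k \<subseteq> factors Y k"
  proof
    fix w assume "w \<in> F k"
    then obtain n p s where ws: "W n = p @ w @ s" and lw: "length w = k"
      unfolding F_def L_def sublist_def by blast
    have "map Y [length p..<length p + k] = w"
    proof (rule nth_equalityI)
      fix j assume "j < length (map Y [length p..<length p + k])"
      then have j: "j < k" by simp
      then have "Y (length p + j) = W n ! (length p + j)" using ws lw by (intro Y_nth) simp
      also have "\<dots> = w ! j" using ws j lw by (simp add: nth_append)
      finally show "map Y [length p..<length p + k] ! j = w ! j" using j by simp
    qed (simp add: lw)
    then show "w \<in> factors Y k" unfolding factors_def by blast
  qed
qed


definition d0 where "d0 c = hd (delta c)"
definition d1 where "d1 c = delta c ! 1"

lemma d0_inj: "d0 x = d0 y \<Longrightarrow> x = y" by (cases x; cases y) (auto simp: d0_def)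
lemma d1_inj: "d1 x = d1 y \<Longrightarrow> x = y" by (cases x; cases y) (auto simp: d1_def)
lemma d01: "d0 x \<noteq> d1 y" by (cases x; cases y) (auto simp: d0_def d1_def)

lemma X_gen: "X m = (if even m then d0 (Y (m div 2)) else d1 (Y (m div 2)))"
proof -
  define i where "i = m div 2"
  have "X m = MI m" using part1 by simp
  also have "\<dots> = mor delta (map Y [0..<Suc i]) ! m" by (rule MI_nth) (simp add: i_def)
  finally have e: "X m = mor delta (map Y [0..<Suc i]) ! m" .
  have md: "mor delta (map Y [0..<Suc i]) ! (2*i) = d0 (Y i) \<and>
            mor delta (map Y [0..<Suc i]) ! (2*i+1) = d1 (Y i)"
    using MD_nth[of i "map Y [0..<Suc i]"] unfolding d0_def d1_def
    by (simp del: upt_Suc add: nth_map_upt)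
  have mi: "m div 2 = i" unfolding i_def by simp
  show ?thesis
  proof (cases "even m")
    case True then have m2: "m = 2*i" unfolding i_def by simp
    have "X m = d0 (Y i)" using e md unfolding m2 by simp
    then show ?thesis using True mi by simp
  next
    case False then have m2: "m = 2*i+1" unfolding i_def by presburger
    have "X m = d1 (Y i)" using e md unfolding m2 by simp
    then show ?thesis using False mi by simp
  qed
qed

definition Phi where "Phi n s w = map (\<lambda>j. if even (s+j) then d0 (w ! ((s+j) div 2))
   else d1 (w ! ((s+j) div 2))) [0..<n]"

lemma Phi_nth: "j < n \<Longrightarrow> Phi n s w ! j = (if even (s+j) then d0 (w ! ((s+j) div 2))
   else d1 (w ! ((s+j) div 2)))" by (simp add: Phi_def)

lemma X_fac: assumes "s < 2"
  shows "map X [2*i+s..<2*i+s+n] = Phi n s (map Y [i..<i+(s+n+1) div 2])"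
proof (rule nth_equalityI)
  show "length (map X [2*i+s..<2*i+s+n]) = length (Phi n s (map Y [i..<i+(s+n+1) div 2]))"
    by (simp add: Phi_def)
  fix j assume "j < length (map X [2*i+s..<2*i+s+n])"
  then have j: "j < n" by simp
  have k: "(s+j) div 2 < (s+n+1) div 2" using j by linarith
  have a: "(2*i+s+j) div 2 = i + (s+j) div 2" by simp
  have b: "even (2*i+s+j) = even (s+j)" by simp
  have "map X [2*i+s..<2*i+s+n] ! j = X (2*i+s+j)" using j by simp
  also have "\<dots> = (if even (s+j) then d0 (Y (i + (s+j) div 2)) else d1 (Y (i + (s+j) div 2)))"
    using X_gen[of "2*i+s+j"] a b by simp
  also have "\<dots> = Phi n s (map Y [i..<i+(s+n+1) div 2]) ! j"
    using j k unfolding Phi_def by simp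
  finally show "map X [2*i+s..<2*i+s+n] ! j = Phi n s (map Y [i..<i+(s+n+1) div 2]) ! j" .
qed

lemma aux1: "t < (n+1) div 2 \<Longrightarrow> 2*t < (n::nat)" by presburger
lemma aux2: "t < (n+2) div 2 \<Longrightarrow> 1 \<le> t \<Longrightarrow> 2*t - 1 < (n::nat)" by presburger
lemma aux3: "1 \<le> t \<Longrightarrow> (1 + (2*t - 1)) div 2 = (t::nat)" by simp

lemma Phi_inj: assumes "s < 2" "1 \<le> n" shows "inj_on (Phi n s) (F ((s+n+1) div 2))"
proof
  fix w1 w2 assume w1: "w1 \<in> F ((s+n+1) div 2)" and w2: "w2 \<in> F ((s+n+1) div 2)"
    and e: "Phi n s w1 = Phi n s w2"
  show "w1 = w2"
  proof (rule nth_equalityI)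
    show "length w1 = length w2" using w1 w2 unfolding F_def by simp
    fix t assume "t < length w1"
    then have t: "t < (s+n+1) div 2" using w1 unfolding F_def by simp
    define j where "j = (if s \<le> 2*t then 2*t - s else 0)"
    have s01: "s = 0 \<or> s = 1" using assms(1) by auto
    have jn: "j < n"
    proof (cases "s = 0")
      case True then show ?thesis using t aux1[of t n] unfolding j_def by simp
    next
      case False then have s1: "s = 1" using s01 by simp
      show ?thesis
      proof (cases "t = 0")
        case True then show ?thesis using assms(2) s1 unfolding j_def by simp
      next
        case False then show ?thesis using t s1 aux2[of t n] unfolding j_def by simp
      qed
    qed
    have jt: "(s+j) div 2 = t"
    proof (cases "s = 0")
      case True then show ?thesis unfolding j_def by simp
    next
      case False then have s1: "s = 1" using s01 by simp
      show ?thesis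
      proof (cases "t = 0")
        case True then show ?thesis using s1 unfolding j_def by simp
      next
        case False then show ?thesis using s1 aux3[of t] unfolding j_def by simp
      qed
    qed
    have pj: "Phi n s w1 ! j = Phi n s w2 ! j" using e by simp
    have "(if even (s+j) then d0 (w1 ! t) else d1 (w1 ! t)) =
               (if even (s+j) then d0 (w2 ! t) else d1 (w2 ! t))"
      using Phi_nth[OF jn, of s w1] Phi_nth[OF jn, of s w2] pj by (simp only: jt)
    then show "w1 ! t = w2 ! t" using d0_inj d1_inj by (cases "even (s+j)") auto
  qed
qed

lemma factors_X: "factors X n = Phi n 0 ` F ((0+n+1) div 2) \<union> Phi n 1 ` F ((1+n+1) div 2)"
proof
  show "factors X n \<subseteq> Phi n 0 ` F ((0+n+1) div 2) \<union> Phi n 1 ` F ((1+n+1) div 2)"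
  proof
    fix z assume "z \<in> factors X n"
    then obtain j where z: "z = map X [j..<j+n]" unfolding factors_def by blast
    define s where "s = j mod 2"
    define i where "i = j div 2"
    have s2: "s < 2" unfolding s_def by simp
    have "j = 2*i+s" unfolding s_def i_def by simp
    then have "z = Phi n s (map Y [i..<i+(s+n+1) div 2])" using X_fac[OF s2] z by simp
    moreover have "map Y [i..<i+(s+n+1) div 2] \<in> F ((s+n+1) div 2)"
      using factors_Y unfolding factors_def by blast
    ultimately have "z \<in> Phi n s ` F ((s+n+1) div 2)" by blast
    moreover have "s = 0 \<or> s = 1" using s2 by auto
    ultimately show "z \<in> Phi n 0 ` F ((0+n+1) div 2) \<union> Phi n 1 ` F ((1+n+1) div 2)" by auto
  qed
  have sub: "Phi n s ` F ((s+n+1) div 2) \<subseteq> factors X n" if "s < 2" for s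
  proof
    fix z assume "z \<in> Phi n s ` F ((s+n+1) div 2)"
    then obtain w where w: "w \<in> F ((s+n+1) div 2)" "z = Phi n s w" by blast
    then obtain i where "w = map Y [i..<i+(s+n+1) div 2]"
      using factors_Y unfolding factors_def by blast
    then have "z = map X [2*i+s..<2*i+s+n]" using X_fac[OF that] w by simp
    then show "z \<in> factors X n" unfolding factors_def by blast
  qed
  show "Phi n 0 ` F ((0+n+1) div 2) \<union> Phi n 1 ` F ((1+n+1) div 2) \<subseteq> factors X n"
    using sub[of 0] sub[of 1] by simp
qed

lemma complexity_X: assumes "1 \<le> n" shows "complexity X n = n + 3"
proof -
  have disj: "Phi n 0 ` F ((0+n+1) div 2) \<inter> Phi n 1 ` F ((1+n+1) div 2) = {}"
  proof (rule ccontr)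
    assume "\<not> ?thesis"
    then obtain w1 w2 where "Phi n 0 w1 = Phi n 1 w2" by blast
    then have "Phi n 0 w1 ! 0 = Phi n 1 w2 ! 0" by simp
    then have "d0 (w1 ! 0) = d1 (w2 ! 0)" using assms unfolding Phi_def by simp
    then show False using d01 by blast
  qed
  have "complexity X n = card (Phi n 0 ` F ((0+n+1) div 2)) + card (Phi n 1 ` F ((1+n+1) div 2))"
    unfolding complexity_def factors_X
    using card_Un_disjoint[OF finite_imageI[OF finite_F] finite_imageI[OF finite_F] disj] by blast
  also have "\<dots> = card (F ((0+n+1) div 2)) + card (F ((1+n+1) div 2))"
    using card_image[OF Phi_inj[of 0 n]] card_image[OF Phi_inj[of 1 n]] assms by simp
  also have "\<dots> = n + 3" unfolding card_F by presburger
  finally show ?thesis .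
qed

theorem proposition2:
  shows "fixpt sigma C0 = mor_inf delta (fixpt g B)
         \<and> (\<forall>n\<ge>1. complexity (fixpt sigma C0) n = n + 3)"
  using part1 complexity_X unfolding X_def MI_def Y_def by simp

end
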